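(* Suppose $n=3$. Then $x\sigma(x)+\sigma(x)\sigma^2(x)+\sigma^2(x)x=0$ and $N_\mathbb{K}(x+\sigma(x))=-N_\mathbb{K}(x)$.
   Context: Let $n=3$ and $p$ a prime with $p\equiv 1 \pmod 3$. Let $\zeta_p=e^{2\pi i/p}$, let $r$ be a primitive root modulo $p$, and let $\sigma$ be the automorphism of $\mathbb{Q}(\zeta_p)$ with $\sigma(\zeta_p)=\zeta_p^r$. Let $\mathbb{K}=\{y\in\mathbb{Q}(\zeta_p):\sigma^3(y)=y\}$, a cubic field. Let $\alpha=\prod_{j=0}^{(p-3)/2}(1-\zeta_p^{r^j})$, $\lambda$ an integer with $\lambda(r-1)\equiv1\pmod p$, $z=\zeta_p^{\lambda}\alpha(1-\zeta_p)$, $x=\mathrm{Tr}_{\mathbb{Q}(\zeta_p)/\mathbb{K}}(z)=\sum_{j=1}^{(p-1)/3}\sigma^{3j}(z)$. $N_\mathbb{K}$ is the norm from $\mathbb{K}$ to $\mathbb{Q}$. *)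

theory Defs
  imports Complex_Main "HOL-Number_Theory.Number_Theory"
begin

definition zeta_pow :: "nat \<Rightarrow> int \<Rightarrow> complex" where
  "zeta_pow p k = cis (2 * pi * of_int k / of_nat p)"

text \<open>Image of z = zeta^lam * alpha * (1 - zeta) under the automorphism zeta -> zeta^a of Q(zeta_p),
  where alpha = prod_{j=0}^{(p-3)/2} (1 - zeta^(r^j)).  For a = r^k this is sigma^k(z).\<close>
definition z_conj :: "nat \<Rightarrow> nat \<Rightarrow> int \<Rightarrow> int \<Rightarrow> complex" where
  "z_conj p r lam a =
     zeta_pow p (lam * a)
     * (\<Prod>j\<in>{0..(p - 3) div 2}. (1 - zeta_pow p (a * int r ^ j)))
     * (1 - zeta_pow p a)"

text \<open>sigma^i(x), where x = Tr_{Q(zeta_p)/K}(z) = sum_{j=1}^{(p-1)/3} sigma^(3j)(z).\<close>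
definition x_conj :: "nat \<Rightarrow> nat \<Rightarrow> int \<Rightarrow> nat \<Rightarrow> complex" where
  "x_conj p r lam i = (\<Sum>j\<in>{1..(p - 1) div 3}. z_conj p r lam (int r ^ (3 * j + i)))"

text \<open>Norm N_K from the cyclic cubic field K to Q of an element y of K, given its
  conjugates f i = sigma^i(y) (i = 0,1,2): the product over Gal(K/Q) = {1, sigma, sigma^2}.\<close>
definition normK :: "(nat \<Rightarrow> complex) \<Rightarrow> complex" where
  "normK f = f 0 * f 1 * f 2"

end

theory Submission
  imports Defs "HOL-Library.Real_Mod"
begin

lemma Z_add: "zeta_pow p (a + b) = zeta_pow p a * zeta_pow p b"
  unfolding zeta_pow_def by (simp add: cis_mult add_divide_distrib distrib_left)

lemma Z_zero[simp]: "zeta_pow p 0 = 1"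
  unfolding zeta_pow_def by simp

lemma Z_mult_p: "p > 0 \<Longrightarrow> zeta_pow p (of_nat p * k) = 1"
  unfolding zeta_pow_def
proof -
  assume "p > 0"
  have "2 * pi * of_int (int p * k) / real p = 2 * pi * of_int k"
    using \<open>p>0\<close> by simp
  then show "cis (2 * pi * of_int (int p * k) / real p) = 1" by simp
qed

lemma Z_cong: assumes "p > 0" "[a = b] (mod int p)" shows "zeta_pow p a = zeta_pow p b"
proof -
  obtain k where k: "a = b + int p * k"
    using assms(2) by (metis cong_iff_lin cong_sym)
  show ?thesis using Z_add[of p b "int p * k"] Z_mult_p[OF assms(1)] k by simp
qed

lemma Z_eq_1: assumes "p > 0" "zeta_pow p a = 1" shows "int p dvd a"
proof -
  from assms(2) obtain n where n: "2 * pi * of_int a / real p = of_int n * (2 * pi)"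
    unfolding zeta_pow_def cis_eq_1_iff by blast
  hence "of_int a / real p = of_int n"
    by (metis (no_types, opaque_lifting) mult.commute nonzero_mult_div_cancel_left pi_neq_zero times_divide_eq_right zero_neq_numeral mult_eq_0_iff)
  hence "of_int a = real_of_int (n * int p)" using assms(1) by (simp add: field_simps)
  hence "a = n * int p" by linarith
  thus ?thesis by simp
qed

lemma Z_pow: "zeta_pow p a ^ n = zeta_pow p (a * int n)"
  unfolding zeta_pow_def DeMoivre by (simp add: algebra_simps)

lemma Z_minus: "zeta_pow p (- a) * zeta_pow p a = 1"
  using Z_add[of p "-a" a] by simp

lemma Z_sum_all: assumes "p > 1" shows "(\<Sum>k<p. zeta_pow p (int k)) = 0"
proof -
  have ne: "zeta_pow p 1 \<noteq> 1"
  proof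
    assume "zeta_pow p 1 = 1"
    hence "int p dvd 1" using Z_eq_1[of p 1] assms by simp
    thus False using assms by simp
  qed
  have "(\<Sum>k<p. zeta_pow p (int k)) = (\<Sum>k<p. zeta_pow p 1 ^ k)"
    by (simp add: Z_pow)
  also have "\<dots> = (zeta_pow p 1 ^ p - 1) / (zeta_pow p 1 - 1)"
    using geometric_sum[OF ne] .
  also have "zeta_pow p 1 ^ p = 1" using Z_pow[of p 1 p] Z_mult_p[of p 1] assms by simp
  finally show ?thesis by simp
qed

lemma pow_mod_period_gen: "(w::complex) ^ N = 1 \<Longrightarrow> w ^ (x mod N) = w ^ x"
  by (metis div_mult_mod_eq power_add power_mult power_one mult_1 mult.commute)

definition om :: complex where "om = Complex (-1/2) (sqrt 3 / 2)"

lemma om_quad: "om ^ 2 + om + 1 = 0"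
  by (simp add: om_def complex_eq_iff power2_eq_square)

lemma om3: "om ^ 3 = 1"
proof -
  have "om ^ 3 - 1 = (om - 1) * (om ^ 2 + om + 1)" by (simp add: algebra_simps power2_eq_square power3_eq_cube)
  thus ?thesis using om_quad by simp
qed

lemma om_ne: "om \<noteq> -1" by (simp add: om_def complex_eq_iff)
lemma om2_ne: "om ^ 2 \<noteq> -1"
proof
  assume "om ^ 2 = -1"
  hence "om = 0" using om_quad by simp
  thus False by (simp add: om_def complex_eq_iff)
qed

lemma om_pow_mod: "om ^ n = om ^ (n mod 3)"
  using pow_mod_period_gen[OF om3] by simp

lemma s_val: "1 + om ^ n + om ^ (2 * n) = (if n mod 3 = 0 then 3 else 0)"
proof -
  have a: "om ^ n = om ^ (n mod 3)" "om ^ (2*n) = om ^ ((2 * n) mod 3)" using om_pow_mod by blast+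
  have "n mod 3 = 0 \<or> n mod 3 = 1 \<or> n mod 3 = 2" by arith
  moreover have "(2 * n) mod 3 = (2 * (n mod 3)) mod 3" by (simp add: mod_mult_right_eq)
  ultimately consider "n mod 3 = 0" "(2*n) mod 3 = 0" | "n mod 3 = 1" "(2*n) mod 3 = 2"
     | "n mod 3 = 2" "(2*n) mod 3 = 1" by force
  then show ?thesis
  proof cases
    case 1 then show ?thesis using a by simp
  next
    case 2 then show ?thesis using a om_quad by (simp add: add_ac)
  next
    case 3 then show ?thesis using a om_quad by (simp add: add_ac)
  qed
qed

definition s3 where "s3 n = 1 + om ^ n + om ^ (2 * n)"

lemma split3: assumes "i < 3"
  shows "(\<Sum>n<3*k. f n * s3 (n + 3 - i)) = 3 * (\<Sum>j<k. f (3 * j + i))"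
proof (induction k)
  case 0 thus ?case by simp
next
  case (Suc k)
  have e: "3 * Suc k = Suc (Suc (Suc (3*k)))" by simp
  have c: "s3 (3*k + d + 3 - i) = (if d = i then 3 else 0)" if "d < 3" for d
  proof -
    have "(3*k + d + 3 - i) mod 3 = 0 \<longleftrightarrow> d = i" using assms that by presburger
    thus ?thesis unfolding s3_def s_val by simp
  qed
  have "(\<Sum>n<3*Suc k. f n * s3 (n + 3 - i)) =
     (\<Sum>n<3*k. f n * s3 (n + 3 - i))
     + f (3*k) * s3 (3*k + 0 + 3 - i)
     + f (3*k+1) * s3 (3*k + 1 + 3 - i)
     + f (3*k+2) * s3 (3*k + 2 + 3 - i)"
    unfolding e by (simp only: sum.lessThan_Suc) (simp add: add.assoc)
  also have "\<dots> = 3 * (\<Sum>j<Suc k. f (3 * j + i))"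
  proof -
    have c0: "s3 (3*k + 0 + 3 - i) = (if 0 = i then 3 else 0)" by (rule c) simp
    have c1: "s3 (3*k + 1 + 3 - i) = (if 1 = i then 3 else 0)" by (rule c) simp
    have c2: "s3 (3*k + 2 + 3 - i) = (if 2 = i then 3 else 0)" by (rule c) simp
    have "i = 0 \<or> i = 1 \<or> i = 2" using assms by arith
    then show ?thesis
    proof (elim disjE)
      assume i: "i = 0"
      show ?thesis unfolding Suc c0 c1 c2 unfolding i by (simp add: ring_distribs)
    next
      assume i: "i = 1"
      show ?thesis unfolding Suc c0 c1 c2 unfolding i by (simp add: ring_distribs)
    next
      assume i: "i = 2"
      show ?thesis unfolding Suc c0 c1 c2 unfolding i by (simp add: ring_distribs)
    qed
  qed
  finally show ?case .
qed

locale S =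
  fixes p r :: nat and lam :: int
  assumes prime: "prime p" and p3: "p mod 3 = 1" and prim: "residue_primroot p r"
    and lamc: "[lam * (int r - 1) = 1] (mod int p)"
begin

lemma p1: "p > 1" using prime prime_gt_1_nat by blast
lemma p0: "p > 0" using p1 by simp
lemma cop: "coprime p r" using prim by (simp add: residue_primroot_def)
lemma ordr: "ord p r = p - 1" using prim prime by (simp add: residue_primroot_def totient_prime)

lemma rpow_cong: "[r ^ a = r ^ b] (mod p) \<longleftrightarrow> [a = b] (mod (p - 1))"
  using order_divides_expdiff[OF cop] ordr by simp

lemma not_dvd_r: "\<not> p dvd r ^ k"
proof
  assume "p dvd r ^ k"
  hence "p dvd r" using prime prime_dvd_power by blast
  thus False using coprime_common_divisor[OF cop dvd_refl] p1 by auto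
qed

lemma L1: assumes "\<not> p dvd c" shows "(\<Sum>l<p-1. zeta_pow p (int (c * r ^ l))) = -1"
proof -
  define f where "f = (\<lambda>l. (c * r ^ l) mod p)"
  have copc: "coprime p c" using assms prime by (simp add: prime_imp_coprime)
  have inj: "inj_on f {..<p-1}"
  proof
    fix a b assume a: "a \<in> {..<p-1}" and b: "b \<in> {..<p-1}" and e: "f a = f b"
    hence "[c * r ^ a = c * r ^ b] (mod p)" by (simp add: f_def cong_def)
    hence "[r ^ a = r ^ b] (mod p)" using copc
      by (metis cong_mult_lcancel_nat coprime_commute)
    hence "[a = b] (mod (p - 1))" using rpow_cong by simp
    thus "a = b" using a b by (simp add: cong_def)
  qed
  have sub: "f ` {..<p-1} \<subseteq> {1..<p}"
  proof
    fix y assume "y \<in> f ` {..<p-1}"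
    then obtain l where y: "y = f l" by auto
    have "\<not> p dvd c * r ^ l" using assms not_dvd_r prime by (simp add: prime_dvd_mult_iff)
    hence "y \<noteq> 0" unfolding y f_def by (simp add: dvd_eq_mod_eq_0)
    moreover have "y < p" unfolding y f_def using p0 by simp
    ultimately show "y \<in> {1..<p}" by simp
  qed
  have eqs: "f ` {..<p-1} = {1..<p}"
    using card_subset_eq[OF _ sub] card_image[OF inj] by simp
  have "(\<Sum>l<p-1. zeta_pow p (int (c * r ^ l))) = (\<Sum>l<p-1. zeta_pow p (int (f l)))"
    by (intro sum.cong refl Z_cong[OF p0]) (simp add: f_def cong_def of_nat_mod)
  also have "\<dots> = (\<Sum>k\<in>{1..<p}. zeta_pow p (int k))"
    using sum.reindex[OF inj, of "\<lambda>k. zeta_pow p (int k)"] eqs by simp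
  also have "\<dots> = (\<Sum>k<p. zeta_pow p (int k)) - 1"
  proof -
    have "{..<p} = insert 0 {1..<p}" using p0 by auto
    thus ?thesis by simp
  qed
  also have "\<dots> = -1" using Z_sum_all[OF p1] by simp
  finally show ?thesis .
qed

definition h where "h = (p - 1) div 2"

lemma p_odd: "odd p"
proof -
  have "p \<noteq> 2" using p3 by auto
  thus ?thesis using prime prime_odd_nat p1 by fastforce
qed

lemma rh: "[int r ^ h = -1] (mod int p)"
proof -
  have e: "p - 1 = 2 * h" unfolding h_def using p_odd p1 by presburger
  have "[r ^ (p - 1) = r ^ 0] (mod p)" by (subst rpow_cong) (simp add: cong_def)
  hence "r ^ (2*h) mod p = 1 mod p" using e by (simp add: cong_def)
  moreover have "1 \<le> r ^ (2*h)" using not_dvd_r[of "2*h"] by (metis dvd_0_right less_one not_le)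
  ultimately have "p dvd r ^ (2*h) - 1" using mod_eq_dvd_iff_nat by blast
  moreover have "r ^ (2*h) - 1 = (r^h - 1) * (r^h + 1)"
    by (simp add: power_mult algebra_simps power2_eq_square)
  moreover have "\<not> p dvd r ^ h - 1"
  proof
    assume "p dvd r ^ h - 1"
    moreover have "r ^ h \<ge> 1" using not_dvd_r[of h] by (metis dvd_0_right less_one not_le power_0 power_eq_0_iff one_le_power)
    ultimately have "r ^ h mod p = 1 mod p" using mod_eq_dvd_iff_nat by blast
    hence "[r ^ h = r ^ 0] (mod p)" by (simp add: cong_def)
    hence "[h = 0] (mod (p - 1))" using rpow_cong by blast
    moreover have "0 < h" "h < p - 1" using e p1 p3 by (auto simp: h_def)
    ultimately show False by (simp add: cong_def)
  qed
  ultimately have "p dvd r ^ h + 1" using prime prime_dvd_mult_iff by metis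
  hence "int p dvd int r ^ h + 1" by (metis of_nat_1 of_nat_add of_nat_dvd_iff of_nat_power)
  thus ?thesis by (simp add: cong_iff_dvd_diff)
qed


lemma h_lt: "h < p - 1" and N_eq: "p - 1 = 2 * h" and h_pos: "0 < h"
  using p_odd p1 p3 unfolding h_def by presburger+

lemma pow_mod_period: "(w::complex) ^ N = 1 \<Longrightarrow> w ^ (x mod N) = w ^ x"
  by (rule pow_mod_period_gen)

lemma Zr_period: "zeta_pow p (int (c * r ^ (x mod (p - 1)))) = zeta_pow p (int (c * r ^ x))"
proof (rule Z_cong[OF p0])
  have "[r ^ (x mod (p - 1)) = r ^ x] (mod p)" by (subst rpow_cong) (simp add: cong_def)
  hence "[c * r ^ (x mod (p - 1)) = c * r ^ x] (mod p)" by (simp add: cong_mult)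
  thus "[int (c * r ^ (x mod (p - 1))) = int (c * r ^ x)] (mod int p)"
    using cong_int_iff by blast
qed

lemma rot_bij: assumes "l < (N::nat)" shows "bij_betw (\<lambda>t. (l + t) mod N) {..<N} {..<N}"
proof -
  have inj: "inj_on (\<lambda>t. (l + t) mod N) {..<N}"
  proof
    fix a b assume "a \<in> {..<N}" "b \<in> {..<N}" "(l + a) mod N = (l + b) mod N"
    hence "[l + a = l + b] (mod N)" "a < N" "b < N" by (auto simp: cong_def)
    hence "[a = b] (mod N)" "a < N" "b < N" using cong_add_lcancel_nat by blast+
    thus "a = b" by (simp add: cong_def)
  qed
  moreover have "(\<lambda>t. (l + t) mod N) ` {..<N} \<subseteq> {..<N}" using assms by auto
  ultimately have "(\<lambda>t. (l + t) mod N) ` {..<N} = {..<N}"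
    using card_subset_eq[of "{..<N}"] card_image by (metis finite_lessThan)
  thus ?thesis using inj by (simp add: bij_betw_def)
qed

definition G :: "complex \<Rightarrow> complex" where
  "G w = (\<Sum>k<p-1. w ^ k * zeta_pow p (int (r ^ k)))"

lemma inner_sum: assumes "t < p - 1"
  shows "(\<Sum>l<p-1. zeta_pow p (int ((r ^ t + 1) * r ^ l))) = (if t = h then of_nat (p - 1) else -1)"
proof (cases "t = h")
  case True
  have "[int r ^ h + 1 = 0] (mod int p)" using rh by (metis add.commute add.right_inverse cong_add_lcancel_0 cong_refl cong_add)
  hence "int p dvd int r ^ h + 1" by (simp add: cong_0_iff)
  hence "int p dvd int ((r ^ h + 1) * r ^ l)" for l by (metis dvd_mult2 of_nat_1 of_nat_add of_nat_mult of_nat_power)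
  hence "zeta_pow p (int ((r ^ h + 1) * r ^ l)) = 1" for l
    using Z_mult_p[OF p0] by (metis dvdE)
  thus ?thesis using True by simp
next
  case False
  have "\<not> p dvd r ^ t + 1"
  proof
    assume "p dvd r ^ t + 1"
    hence "int p dvd int r ^ t + 1" by (metis of_nat_1 of_nat_add of_nat_dvd_iff of_nat_power)
    hence "[int r ^ t = -1] (mod int p)" by (simp add: cong_iff_dvd_diff)
    hence "[int r ^ t = int r ^ h] (mod int p)" using rh by (meson cong_sym cong_trans)
    hence "[r ^ t = r ^ h] (mod p)" by (metis cong_int_iff of_nat_power)
    hence "[t = h] (mod (p - 1))" using rpow_cong by blast
    thus False using assms h_lt False by (simp add: cong_def)
  qed
  hence "(\<Sum>l<p-1. zeta_pow p (int ((r ^ t + 1) * r ^ l))) = -1" by (rule L1)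
  thus ?thesis by (simp only: False if_False)
qed

lemma Gauss: assumes w1: "w ^ (p - 1) = 1" and wn: "w \<noteq> 1"
  shows "G w * G (inverse w) = w ^ h * of_nat p"
proof -
  define N where "N = p - 1"
  have wnz: "w \<noteq> 0" using w1 p1 by (cases "w = 0") (auto simp: power_0_left)
  have "G w * G (inverse w) = (\<Sum>k<N. \<Sum>l<N. w ^ k * inverse w ^ l * zeta_pow p (int (r ^ k + r ^ l)))"
    unfolding G_def N_def sum_product
    by (intro sum.cong refl) (simp add: Z_add algebra_simps)
  also have "\<dots> = (\<Sum>l<N. \<Sum>k<N. w ^ k * inverse w ^ l * zeta_pow p (int (r ^ k + r ^ l)))"
    by (rule sum.swap)
  also have "\<dots> = (\<Sum>l<N. \<Sum>t<N. w ^ ((l + t) mod N) * inverse w ^ l * zeta_pow p (int (r ^ ((l + t) mod N) + r ^ l)))"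
  proof (rule sum.cong[OF refl])
    fix l assume "l \<in> {..<N}"
    thus "(\<Sum>k<N. w ^ k * inverse w ^ l * zeta_pow p (int (r ^ k + r ^ l))) =
          (\<Sum>t<N. w ^ ((l + t) mod N) * inverse w ^ l * zeta_pow p (int (r ^ ((l + t) mod N) + r ^ l)))"
      using sum.reindex_bij_betw[OF rot_bij[of l N], of "\<lambda>k. w ^ k * inverse w ^ l * zeta_pow p (int (r ^ k + r ^ l))"]
      by simp
  qed
  also have "\<dots> = (\<Sum>l<N. \<Sum>t<N. w ^ t * zeta_pow p (int ((r ^ t + 1) * r ^ l)))"
  proof (intro sum.cong refl)
    fix l t
    have a: "w ^ ((l + t) mod N) = w ^ (l + t)" using pow_mod_period w1 N_def by blast
    have b: "zeta_pow p (int (r ^ ((l + t) mod N) + r ^ l)) = zeta_pow p (int ((r ^ t + 1) * r ^ l))"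
    proof -
      have "zeta_pow p (int (r ^ ((l + t) mod N) + r ^ l)) = zeta_pow p (int (r ^ ((l + t) mod N))) * zeta_pow p (int (r ^ l))"
        by (simp add: Z_add)
      also have "zeta_pow p (int (r ^ ((l + t) mod N))) = zeta_pow p (int (r ^ (l + t)))"
        using Zr_period[of 1 "l + t"] by (simp add: N_def)
      also have "\<dots> * zeta_pow p (int (r ^ l)) = zeta_pow p (int (r ^ (l + t) + r ^ l))"
        by (simp add: Z_add)
      finally show ?thesis by (simp add: power_add algebra_simps)
    qed
    have c: "w ^ (l + t) * inverse w ^ l = w ^ t" using wnz by (simp add: power_add power_inverse field_simps)
    show "w ^ ((l + t) mod N) * inverse w ^ l * zeta_pow p (int (r ^ ((l + t) mod N) + r ^ l)) =
          w ^ t * zeta_pow p (int ((r ^ t + 1) * r ^ l))" using a b c by simp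
  qed
  also have "\<dots> = (\<Sum>t<N. w ^ t * (\<Sum>l<N. zeta_pow p (int ((r ^ t + 1) * r ^ l))))"
    by (subst sum.swap) (simp add: sum_distrib_left)
  also have "\<dots> = (\<Sum>t<N. - (w ^ t) + (if t = h then w ^ t * of_nat p else 0))"
  proof (intro sum.cong refl)
    fix t assume "t \<in> {..<N}"
    thus "w ^ t * (\<Sum>l<N. zeta_pow p (int ((r ^ t + 1) * r ^ l))) = - (w ^ t) + (if t = h then w ^ t * of_nat p else 0)"
      using inner_sum[of t] p1 unfolding N_def by (auto simp: algebra_simps of_nat_diff)
  qed
  also have "\<dots> = - (\<Sum>t<N. w ^ t) + w ^ h * of_nat p"
    using h_lt by (simp only: sum.distrib sum_negf) (simp add: N_def)
  also have "(\<Sum>t<N. w ^ t) = 0" using geometric_sum[OF wn, of N] w1 by (simp add: N_def)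
  finally show ?thesis by simp
qed


abbreviation Zr where "Zr n \<equiv> zeta_pow p (int r ^ n)"
abbreviation zz where "zz n \<equiv> z_conj p r lam (int r ^ n)"

lemma Zr_ne1: "1 - Zr n \<noteq> 0"
proof
  assume "1 - Zr n = 0"
  hence "int p dvd int r ^ n" using Z_eq_1[OF p0] by simp
  hence "p dvd r ^ n" by (metis of_nat_dvd_iff of_nat_power)
  thus False using not_dvd_r by blast
qed

lemma hm1: "(p - 3) div 2 = h - 1" unfolding h_def using p1 by simp

lemma zz_unfold: "zz n = zeta_pow p (lam * int r ^ n) * (\<Prod>j\<in>{0..h-1}. (1 - Zr (n + j))) * (1 - Zr n)"
  unfolding z_conj_def hm1 by (simp add: power_add)

lemma prod_shift: "(\<Prod>j\<in>{0..h-1}. (1 - Zr (Suc n + j))) * (1 - Zr n) =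
    (\<Prod>j\<in>{0..h-1}. (1 - Zr (n + j))) * (1 - Zr (n + h))"
proof -
  obtain m where m: "h = Suc m" using h_pos by (cases h) auto
  have "(\<Prod>j\<in>{0..h}. (1 - Zr (n + j))) = (1 - Zr n) * (\<Prod>j\<in>{0..m}. (1 - Zr (n + Suc j)))"
    unfolding m prod.atLeast0_atMost_Suc_shift by (simp add: comp_def)
  moreover have "(\<Prod>j\<in>{0..h}. (1 - Zr (n + j))) = (\<Prod>j\<in>{0..m}. (1 - Zr (n + j))) * (1 - Zr (n + Suc m))"
    unfolding m by (rule prod.atLeast0_atMost_Suc)
  ultimately show ?thesis using m by (simp add: mult.commute)
qed

lemma Zr_h: "Zr (n + h) = zeta_pow p (- (int r ^ n))"
proof (rule Z_cong[OF p0])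
  have "[int r ^ n * int r ^ h = int r ^ n * (-1)] (mod int p)" using rh by (rule cong_scalar_left)
  thus "[int r ^ (n + h) = - (int r ^ n)] (mod int p)" by (simp add: power_add)
qed

lemma Zlam: "zeta_pow p (lam * int r ^ Suc n) = zeta_pow p (lam * int r ^ n) * Zr n"
proof -
  have "[lam * (int r - 1) * int r ^ n = 1 * int r ^ n] (mod int p)" using lamc by (rule cong_scalar_right)
  hence "[lam * int r ^ n + lam * (int r - 1) * int r ^ n = lam * int r ^ n + int r ^ n] (mod int p)"
    by (simp add: cong_add_lcancel)
  moreover have "lam * int r ^ Suc n = lam * int r ^ n + lam * (int r - 1) * int r ^ n"
    by (simp add: algebra_simps)
  ultimately have "zeta_pow p (lam * int r ^ Suc n) = zeta_pow p (lam * int r ^ n + int r ^ n)"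
    using Z_cong[OF p0] by simp
  thus ?thesis by (simp add: Z_add)
qed

lemma zz_rec: "zz (Suc n) * (1 - Zr n) = - (1 - Zr (Suc n)) * zz n"
proof -
  define A where "A = zeta_pow p (lam * int r ^ n)"
  define P where "P = (\<Prod>j\<in>{0..h-1}. (1 - Zr (n + j)))"
  have "zz (Suc n) * (1 - Zr n) = A * Zr n * ((\<Prod>j\<in>{0..h-1}. (1 - Zr (Suc n + j))) * (1 - Zr n)) * (1 - Zr (Suc n))"
    unfolding zz_unfold[of "Suc n"] Zlam A_def by (simp add: algebra_simps)
  also have "\<dots> = A * P * (Zr n * (1 - zeta_pow p (- (int r ^ n)))) * (1 - Zr (Suc n))"
    unfolding prod_shift Zr_h P_def by (simp add: algebra_simps)
  also have "Zr n * (1 - zeta_pow p (- (int r ^ n))) = - (1 - Zr n)"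
    using Z_minus[of p "int r ^ n"] by (simp add: algebra_simps)
  finally show ?thesis unfolding zz_unfold[of n] A_def P_def by (simp add: algebra_simps)
qed

definition cc where "cc = zz 0 / (1 - Zr 0)"

lemma zz_formula: "zz n = (-1) ^ n * (1 - Zr n) * cc"
proof (induction n)
  case 0
  then show ?case using Zr_ne1[of 0] unfolding cc_def by simp
next
  case (Suc n)
  have "zz (Suc n) = - (1 - Zr (Suc n)) * zz n / (1 - Zr n)"
    using zz_rec[of n] Zr_ne1[of n] by (simp add: field_simps)
  also have "\<dots> = (-1) ^ Suc n * (1 - Zr (Suc n)) * cc"
    unfolding Suc using Zr_ne1[of n] by (simp add: field_simps)
  finally show ?case .
qed


definition m where "m = (p - 1) div 3"
lemma m3: "p - 1 = 3 * m" unfolding m_def using p3 p1 by presburger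
lemma m_q: "\<exists>q. m = 2 * q \<and> h = 3 * q"
proof -
  have "even (p - 1)" using p_odd p1 by simp
  hence "even m" using m3 by presburger
  then obtain q where "m = 2 * q" by blast
  moreover have "h = 3 * q" using N_eq m3 calculation by simp
  ultimately show ?thesis by blast
qed

definition F :: "nat \<Rightarrow> complex" where "F n = (-1) ^ n * Zr n"
definition Y where "Y i = (\<Sum>j\<in>{1..m}. F (3 * j + i))"

lemma alt_sum: "(\<Sum>j\<in>{1..2*q}. (-1::complex) ^ j) = 0"
  by (induction q) (simp_all add: numeral_eq_Suc)

lemma neg3: "((-1::complex) ^ x) ^ 3 = (-1) ^ x" by (cases "even x") simp_all

lemma x_eq: "x_conj p r lam i = - cc * Y i"
proof -
  have "x_conj p r lam i = (\<Sum>j\<in>{1..m}. (-1) ^ i * ((-1) ^ j * cc) - F (3 * j + i) * cc)"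
    unfolding x_conj_def m_def[symmetric] zz_formula
    by (intro sum.cong refl) (simp add: F_def power_add power_mult algebra_simps neg3)
  also have "\<dots> = (-1) ^ i * cc * (\<Sum>j\<in>{1..m}. (-1) ^ j) - cc * Y i"
    unfolding Y_def by (simp add: sum_subtractf sum_distrib_left sum_distrib_right algebra_simps)
  also have "(\<Sum>j\<in>{1..m}. (-1::complex) ^ j) = 0" using m_q alt_sum by auto
  finally show ?thesis by simp
qed

lemma Zr_shift: "Zr (3 * m + i) = Zr i"
proof (rule Z_cong[OF p0])
  have "[r ^ (3 * m + i) = r ^ i] (mod p)" by (subst rpow_cong) (simp add: cong_def m3[symmetric])
  thus "[int r ^ (3 * m + i) = int r ^ i] (mod int p)" by (metis cong_int_iff of_nat_power)
qed

lemma F_shift: "F (3 * m + i) = F i"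
proof -
  have "even (3 * m)" using m_q by auto
  thus ?thesis unfolding F_def Zr_shift by (simp add: power_add)
qed

lemma Y_shift: "Y i = (\<Sum>j<m. F (3 * j + i))"
proof -
  have "Y i = (\<Sum>j<m. F (3 * Suc j + i))"
    unfolding Y_def using sum.atLeast1_atMost_eq[of "\<lambda>j. F (3 * j + i)" m] by simp
  moreover have "(\<Sum>j<m. F (3 * Suc j + i) - F (3 * j + i)) = F (3 * m + i) - F (3 * 0 + i)"
    by (rule sum_lessThan_telescope)
  ultimately show ?thesis using F_shift by (simp add: sum_subtractf)
qed

lemma G_Zr: "G w = (\<Sum>k<p-1. w ^ k * Zr k)" by (simp add: G_def)

lemma Y_G: assumes "i < 3"
  shows "3 * Y i = G (-1) + om ^ (3 - i) * G (- om) + om ^ (2 * (3 - i)) * G (- (om ^ 2))"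
proof -
  have "3 * Y i = (\<Sum>n<3*m. F n * s3 (n + 3 - i))"
    unfolding Y_shift using split3[OF assms] by simp
  also have "\<dots> = (\<Sum>n<p-1. (-1) ^ n * Zr n + om ^ (3 - i) * ((- om) ^ n * Zr n)
                    + om ^ (2 * (3 - i)) * ((- (om ^ 2)) ^ n * Zr n))"
  proof (intro sum.cong)
    show "{..<3*m} = {..<p-1}" using m3 by simp
  next
    fix n
    have e: "n + 3 - i = n + (3 - i)" using assms by simp
    show "F n * s3 (n + 3 - i) = (-1) ^ n * Zr n + om ^ (3 - i) * ((- om) ^ n * Zr n)
                    + om ^ (2 * (3 - i)) * ((- (om ^ 2)) ^ n * Zr n)"
    proof -
      have a: "om ^ (n + (3 - i)) = om ^ n * om ^ (3 - i)" by (simp only: power_add)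
      have b: "om ^ (2 * (n + (3 - i))) = (om ^ 2) ^ n * om ^ (2 * (3 - i))"
        by (simp only: distrib_left power_add power_mult)
      have c: "(- om) ^ n = (-1) ^ n * om ^ n" by (rule power_minus)
      have d: "(- (om ^ 2)) ^ n = (-1) ^ n * (om ^ 2) ^ n" by (rule power_minus)
      show ?thesis unfolding F_def s3_def e a b c d by (simp add: algebra_simps)
    qed
  qed
  also have "\<dots> = G (-1) + om ^ (3 - i) * G (- om) + om ^ (2 * (3 - i)) * G (- (om ^ 2))"
    unfolding G_Zr by (simp add: sum.distrib sum_distrib_left)
  finally show ?thesis .
qed


lemma AA_BC: "G (-1) * G (-1) = G (- om) * G (- (om ^ 2))"
proof -
  obtain q where q: "m = 2 * q" "h = 3 * q" using m_q by blast
  have pm: "p - 1 = 3 * (2 * q)" using m3 q by simp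
  have om3': "(- om) ^ 3 = -1"
  proof -
    have "(- om) ^ 3 = - (om ^ 3)" by (simp add: power3_eq_cube)
    thus ?thesis using om3 by simp
  qed
  have ev: "even (p - 1)" unfolding pm by simp
  have m1: "(-1::complex) ^ (p - 1) = 1" using ev by (rule neg_one_even_power)
  have n1: "(-1::complex) \<noteq> 1" by simp
  have "G (-1) * G (inverse (-1)) = (-1) ^ h * of_nat p"
    by (rule Gauss[OF m1 n1])
  moreover have "(-1::complex) ^ h = (-1) ^ q" unfolding q power_mult by simp
  ultimately have g1: "G (-1) * G (-1) = (-1) ^ q * of_nat p" by simp
  have inv: "inverse (- om) = - (om ^ 2)"
  proof (rule inverse_unique)
    show "- om * - (om ^ 2) = 1" using om3 by (simp add: power3_eq_cube power2_eq_square mult.assoc)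
  qed
  have w1: "(- om) ^ (p - 1) = 1" unfolding pm power_mult om3' by simp
  have wn: "- om \<noteq> 1" using om_ne by (metis minus_minus)
  have "G (- om) * G (inverse (- om)) = (- om) ^ h * of_nat p"
    by (rule Gauss[OF w1 wn])
  hence g2: "G (- om) * G (- (om ^ 2)) = (-1) ^ q * of_nat p"
    unfolding inv q power_mult om3' .
  show ?thesis using g1 g2 by simp
qed

end

lemma alg: fixes A B C y0 y1 y2 w :: complex
  assumes "w ^ 2 + w + 1 = 0" "3 * y0 = A + B + C" "3 * y1 = A + w ^ 2 * B + w * C"
    "3 * y2 = A + w * B + w ^ 2 * C" "A * A = B * C"
  shows "y0 * y1 + y1 * y2 + y2 * y0 = 0"
proof -
  have "9 * (y0 * y1 + y1 * y2 + y2 * y0) = (3 * y0) * (3 * y1) + (3 * y1) * (3 * y2) + (3 * y2) * (3 * y0)"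
    by (simp add: algebra_simps)
  also have "\<dots> = (A + B + C) * (A + w ^ 2 * B + w * C) + (A + w ^ 2 * B + w * C) * (A + w * B + w ^ 2 * C)
     + (A + w * B + w ^ 2 * C) * (A + B + C)" using assms(2-4) by simp
  also have "\<dots> = 3 * (A * A - B * C) + (w ^ 2 + w + 1) *
     (2 * A * B + 2 * A * C + w * B * B + w * C * C + (3 + w ^ 2 - w) * B * C)"
    by (simp add: algebra_simps power2_eq_square)
  also have "\<dots> = 0" using assms(1,5) by simp
  finally have h: "9 * (y0 * y1 + y1 * y2 + y2 * y0) = 0" .
  show ?thesis using h by (metis mult_eq_0_iff zero_neq_numeral)
qed

lemma alg2: fixes x0 x1 x2 :: complex
  assumes "x0 * x1 + x1 * x2 + x2 * x0 = 0"
  shows "(x0 + x1) * (x1 + x2) * (x2 + x0) = - (x0 * x1 * x2)"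
proof -
  have "(x0 + x1) * (x1 + x2) * (x2 + x0) = (x0 + x1 + x2) * (x0 * x1 + x1 * x2 + x2 * x0) - x0 * x1 * x2"
    by (simp add: algebra_simps)
  thus ?thesis using assms by simp
qed

theorem mainTheorem9:
  fixes p r :: nat and lam :: int
  assumes "prime p" and "p mod 3 = 1"
    and "residue_primroot p r"
    and "[lam * (int r - 1) = 1] (mod int p)"
  shows "x_conj p r lam 0 * x_conj p r lam 1 + x_conj p r lam 1 * x_conj p r lam 2
           + x_conj p r lam 2 * x_conj p r lam 0 = 0 \<and>
         normK (\<lambda>i. x_conj p r lam i + x_conj p r lam (i + 1)) = - normK (x_conj p r lam)"
proof -
  interpret S p r lam using assms by unfold_locales
  have o6: "om ^ 6 = 1"
  proof -
    have "om ^ 6 = (om ^ 3) ^ 2" by (simp flip: power_mult)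
    thus ?thesis using om3 by simp
  qed
  have o4: "om ^ 4 = om"
  proof -
    have "om ^ 4 = om ^ 3 * om" by (simp flip: power_Suc2)
    thus ?thesis using om3 by simp
  qed
  have Y0: "3 * Y 0 = G (-1) + G (- om) + G (- (om ^ 2))" using Y_G[of 0] om3 o6 by simp
  have Y1: "3 * Y 1 = G (-1) + om ^ 2 * G (- om) + om * G (- (om ^ 2))" using Y_G[of 1] o4 by simp
  have Y2: "3 * Y 2 = G (-1) + om * G (- om) + om ^ 2 * G (- (om ^ 2))" using Y_G[of 2] by simp
  have eY: "Y 0 * Y 1 + Y 1 * Y 2 + Y 2 * Y 0 = 0"
    by (rule alg[OF om_quad Y0 Y1 Y2 AA_BC])
  have e2: "x_conj p r lam 0 * x_conj p r lam 1 + x_conj p r lam 1 * x_conj p r lam 2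
           + x_conj p r lam 2 * x_conj p r lam 0 = 0"
  proof -
    have "x_conj p r lam 0 * x_conj p r lam 1 + x_conj p r lam 1 * x_conj p r lam 2
           + x_conj p r lam 2 * x_conj p r lam 0 = cc * cc * (Y 0 * Y 1 + Y 1 * Y 2 + Y 2 * Y 0)"
      unfolding x_eq by (simp add: algebra_simps)
    thus ?thesis using eY by simp
  qed
  have Y3: "Y 3 = Y 0"
  proof -
    have "Y 0 = (\<Sum>j<m. F (3 * Suc j + 0))"
      unfolding Y_def using sum.atLeast1_atMost_eq[of "\<lambda>j. F (3 * j + 0)" m] by simp
    also have "\<dots> = Y 3" unfolding Y_shift by (simp add: add.commute)
    finally show ?thesis by simp
  qed
  have x3: "x_conj p r lam 3 = x_conj p r lam 0" unfolding x_eq Y3 ..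
  have "normK (\<lambda>i. x_conj p r lam i + x_conj p r lam (i + 1)) =
     (x_conj p r lam 0 + x_conj p r lam 1) * (x_conj p r lam 1 + x_conj p r lam 2) * (x_conj p r lam 2 + x_conj p r lam 0)"
  proof -
    have a: "(0::nat) + 1 = 1" "(1::nat) + 1 = 2" "(2::nat) + 1 = 3" by simp_all
    show ?thesis unfolding normK_def a x3 ..
  qed
  also have "\<dots> = - normK (x_conj p r lam)"
    unfolding normK_def by (rule alg2[OF e2])
  finally show ?thesis using e2 by simp
qed

end
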